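(* Let $G$ be a directed graph with vertices $s,t$ and $k\ge1$. For any $C_1,C_2\in L^*$ and any $e\in E(G)$, we have $B_e(C_1\vee C_2)+B_e(C_1\wedge C_2)\le B_e(C_1)+B_e(C_2)$, where $B_e(C)=\binom{\mu_e(C)}{2}$.
   Context: An $s$-$t$ cut of a directed graph $G$ is a set $X\subseteq E(G)$ such that removing $X$ leaves no directed $s$-$t$ path; $\Gamma_G(s,t)$ is the set of $s$-$t$ cuts of minimum cardinality. Fix a maximum-size collection $\mathcal P$ of pairwise edge-disjoint directed $s$-$t$ paths (each minimum $s$-$t$ cut contains exactly one edge of each path in $\mathcal P$). For $X,Y\in\Gamma_G(s,t)$, $S_{\min}(X\cup Y)$ (resp. $S_{\max}(X\cup Y)$) consists, for each $p\in\mathcal P$, of the edge of $(X\cup Y)\cap p$ occurring first (resp. last) along $p$. $X\le Y$ means every directed $s$-$t$ path meets an edge of $X$ at or before an edge of $Y$. $U^k_{\mathrm{lr}}$ is the set of $k$-tuples $[X_1,\dots,X_k]$ of elements of $\Gamma_G(s,t)$ with $X_i\le X_j$ for all $i<j$. $L^*$ is the lattice on $U^k_{\mathrm{lr}}$ with componentwise order, join $[X_i]_i\vee[Y_i]_i=[S_{\max}(X_i\cup Y_i)]_i$ and meet $[X_i]_i\wedge[Y_i]_i=[S_{\min}(X_i\cup Y_i)]_i$. For $C=[X_1,\dots,X_k]$, $\mu_e(C)$ is the number of indices $i$ with $e\in X_i$. *)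

theory Defs
  imports Main "Graph_Theory.Digraph" "Graph_Theory.Arc_Walk"
begin

text \<open>Directed s-t paths are the arc paths of the AFP Graph_Theory library
  (arc lists with distinct visited vertices).\<close>

definition st_cut :: "('a,'b) pre_digraph \<Rightarrow> 'a \<Rightarrow> 'a \<Rightarrow> 'b set \<Rightarrow> bool" where
  "st_cut G s t X \<longleftrightarrow> X \<subseteq> arcs G \<and>
     (\<forall>p. pre_digraph.apath G s p t \<longrightarrow> set p \<inter> X \<noteq> {})"

definition min_cuts :: "('a,'b) pre_digraph \<Rightarrow> 'a \<Rightarrow> 'a \<Rightarrow> 'b set set" where
  "min_cuts G s t = {X. st_cut G s t X \<and> (\<forall>Y. st_cut G s t Y \<longrightarrow> card X \<le> card Y)}"

definition max_disjoint_paths :: "('a,'b) pre_digraph \<Rightarrow> 'a \<Rightarrow> 'a \<Rightarrow> 'b list set \<Rightarrow> bool" where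
  "max_disjoint_paths G s t P \<longleftrightarrow>
     (let ok = (\<lambda>Q. finite Q \<and> (\<forall>p\<in>Q. pre_digraph.apath G s p t) \<and>
                    (\<forall>p\<in>Q. \<forall>q\<in>Q. p \<noteq> q \<longrightarrow> set p \<inter> set q = {}))
      in ok P \<and> (\<forall>Q. ok Q \<longrightarrow> card Q \<le> card P))"

definition S_min :: "'b list set \<Rightarrow> 'b set \<Rightarrow> 'b set" where
  "S_min P Z = {hd (filter (\<lambda>e. e \<in> Z) p) | p. p \<in> P}"

definition S_max :: "'b list set \<Rightarrow> 'b set \<Rightarrow> 'b set" where
  "S_max P Z = {last (filter (\<lambda>e. e \<in> Z) p) | p. p \<in> P}"

definition cut_le :: "('a,'b) pre_digraph \<Rightarrow> 'a \<Rightarrow> 'a \<Rightarrow> 'b set \<Rightarrow> 'b set \<Rightarrow> bool" where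
  "cut_le G s t X Y \<longleftrightarrow> (\<forall>p. pre_digraph.apath G s p t \<longrightarrow>
      (\<exists>i<length p. p ! i \<in> X \<and> (\<forall>j<i. p ! j \<notin> Y)))"

definition U_lr :: "('a,'b) pre_digraph \<Rightarrow> 'a \<Rightarrow> 'a \<Rightarrow> nat \<Rightarrow> 'b set list set" where
  "U_lr G s t k = {C. length C = k \<and> set C \<subseteq> min_cuts G s t \<and>
      (\<forall>i j. i < j \<and> j < k \<longrightarrow> cut_le G s t (C ! i) (C ! j))}"

definition L_join :: "'b list set \<Rightarrow> 'b set list \<Rightarrow> 'b set list \<Rightarrow> 'b set list" where
  "L_join P C D = map2 (\<lambda>X Y. S_max P (X \<union> Y)) C D"

definition L_meet :: "'b list set \<Rightarrow> 'b set list \<Rightarrow> 'b set list \<Rightarrow> 'b set list" where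
  "L_meet P C D = map2 (\<lambda>X Y. S_min P (X \<union> Y)) C D"

definition mu :: "'b \<Rightarrow> 'b set list \<Rightarrow> nat" where
  "mu e C = card {i. i < length C \<and> e \<in> C ! i}"

definition B :: "'b \<Rightarrow> 'b set list \<Rightarrow> nat" where
  "B e C = mu e C choose 2"

end

theory Submission
  imports Defs
begin


lemma choose2_int: "int (x choose 2) * 2 = int x * int x - int x"
proof -
  have "x choose 2 = x * (x - 1) div 2" by (simp add: choose_two)
  moreover have "even (x * (x - 1))" by auto
  ultimately have "(x choose 2) * 2 = x * (x - 1)" by simp
  then have "int (x choose 2) * 2 = int (x * (x - 1))" by (metis of_nat_mult of_nat_numeral)
  also have "\<dots> = int x * int x - int x" by (cases x) (auto simp: algebra_simps)
  finally show ?thesis .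
qed

lemma sq_aux: "(m::int) = a + b - j \<Longrightarrow> j * j + m * m = a*a + b*b - 2*((a - j)*(j - b))"
  by (hypsubst) (simp add: algebra_simps)

lemma arith_core:
  fixes J M A B :: nat
  assumes s: "J + M = A + B" and j: "J \<le> A \<or> J \<le> B" and m: "M \<le> A \<or> M \<le> B"
  shows "(J choose 2) + (M choose 2) \<le> (A choose 2) + (B choose 2)"
proof -
  have key: "int J * int J + int M * int M \<le> int A * int A + int B * int B"
  proof -
    have "(int A - int J) * (int J - int B) \<ge> 0 \<or> (int B - int J) * (int J - int A) \<ge> 0"
      using s j m by (auto intro!: mult_nonneg_nonneg)
    moreover have "int M = int A + int B - int J" using s by linarith
    then have "int J * int J + int M * int M = int A*int A + int B*int B - 2*((int A - int J)*(int J - int B))"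
      by (rule sq_aux)
    moreover have "(int B - int J) * (int J - int A) = (int A - int J)*(int J - int B)"
      by (simp add: algebra_simps)
    ultimately show ?thesis by linarith
  qed
  have "int ((J choose 2) + (M choose 2)) * 2 \<le> int ((A choose 2) + (B choose 2)) * 2"
    using key s choose2_int[of J] choose2_int[of M] choose2_int[of A] choose2_int[of B]
    by (simp add: algebra_simps)
  then show ?thesis by simp
qed

lemma core:
  fixes x y :: "nat \<Rightarrow> nat" and k n :: nat
  assumes mx: "\<And>i i'. i \<le> i' \<Longrightarrow> i' < k \<Longrightarrow> x i \<le> x i'"
    and my: "\<And>i i'. i \<le> i' \<Longrightarrow> i' < k \<Longrightarrow> y i \<le> y i'"
  shows "(card {i. i < k \<and> max (x i) (y i) = n} choose 2) + (card {i. i < k \<and> min (x i) (y i) = n} choose 2)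
     \<le> (card {i. i < k \<and> x i = n} choose 2) + (card {i. i < k \<and> y i = n} choose 2)"
proof -
  define SA where "SA = {i. i < k \<and> x i = n}"
  define SB where "SB = {i. i < k \<and> y i = n}"
  define SJ where "SJ = {i. i < k \<and> max (x i) (y i) = n}"
  define SM where "SM = {i. i < k \<and> min (x i) (y i) = n}"
  have fin: "finite SA" "finite SB" "finite SJ" "finite SM" unfolding SA_def SB_def SJ_def SM_def by auto
  have J: "SJ \<subseteq> SA \<or> SJ \<subseteq> SB"
  proof (rule ccontr)
    assume "\<not> ?thesis"
    then obtain i i' where i: "i \<in> SJ" "i \<notin> SA" and i': "i' \<in> SJ" "i' \<notin> SB" by blast
    then have a: "y i = n" "x i \<le> n" "x i \<noteq> n" "x i' = n" "y i' \<le> n" "y i' \<noteq> n" "i < k" "i' < k"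
      unfolding SA_def SB_def SJ_def by (auto simp: max_def split: if_splits)
    show False
    proof (cases "i \<le> i'")
      case True then show False using my[of i i'] a by auto
    next
      case False then show False using mx[of i' i] a by auto
    qed
  qed
  have M: "SM \<subseteq> SA \<or> SM \<subseteq> SB"
  proof (rule ccontr)
    assume "\<not> ?thesis"
    then obtain i i' where i: "i \<in> SM" "i \<notin> SA" and i': "i' \<in> SM" "i' \<notin> SB" by blast
    then have a: "y i = n" "x i \<ge> n" "x i \<noteq> n" "x i' = n" "y i' \<ge> n" "y i' \<noteq> n" "i < k" "i' < k"
      unfolding SA_def SB_def SM_def by (auto simp: min_def split: if_splits)
    show False
    proof (cases "i \<le> i'")
      case True then show False using mx[of i i'] a by auto
    next
      case False then show False using my[of i' i] a by auto
    qed
  qed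
  have U: "SJ \<union> SM = SA \<union> SB" unfolding SA_def SB_def SJ_def SM_def by (auto simp: max_def min_def)
  have I: "SJ \<inter> SM = SA \<inter> SB" unfolding SA_def SB_def SJ_def SM_def by (auto simp: max_def min_def)
  have "card SJ + card SM = card SA + card SB"
    using card_Un_Int[OF fin(3,4)] card_Un_Int[OF fin(1,2)] U I by simp
  moreover have "card SJ \<le> card SA \<or> card SJ \<le> card SB" using J fin card_mono by metis
  moreover have "card SM \<le> card SA \<or> card SM \<le> card SB" using M fin card_mono by metis
  ultimately show ?thesis using arith_core unfolding SA_def SB_def SJ_def SM_def by blast
qed



definition ind :: "'a \<Rightarrow> 'a \<Rightarrow> 'a \<Rightarrow> int" where
  "ind s t v = (if v = s then 1 else 0) - (if v = t then 1 else 0)"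

definition net :: "('a,'b) pre_digraph \<Rightarrow> 'b set \<Rightarrow> 'a \<Rightarrow> int" where
  "net G A v = (\<Sum>a\<in>A. (if tail G a = v then 1 else 0) - (if head G a = v then 1 else 0))"

lemma trail_net:
  assumes wf: "wf_digraph G" and "pre_digraph.awalk G u p w" "distinct p"
  shows "net G (set p) v = ind u w v"
  using assms(2,3)
proof (induction p arbitrary: u)
  case Nil
  then show ?case by (auto simp: net_def ind_def wf_digraph.awalk_Nil_iff[OF wf])
next
  case (Cons a p)
  then have h: "a \<in> arcs G" "u = tail G a" "pre_digraph.awalk G (head G a) p w" "a \<notin> set p" "distinct p"
    by (auto simp: wf_digraph.awalk_Cons_iff[OF wf])
  have "net G (set (a # p)) v = ((if tail G a = v then 1 else 0) - (if head G a = v then 1 else 0)) + net G (set p) v"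
    using h(4) by (simp add: net_def)
  also have "\<dots> = ind u w v" using Cons.IH[OF h(3) h(5)] h(2) by (auto simp: ind_def)
  finally show ?case .
qed

lemma net_diff: "finite A \<Longrightarrow> Bs \<subseteq> A \<Longrightarrow> net G (A - Bs) v = net G A v - net G Bs v"
  unfolding net_def by (rule sum_diff)

lemma net_union: "finite A \<Longrightarrow> finite Bs \<Longrightarrow> A \<inter> Bs = {} \<Longrightarrow> net G (A \<union> Bs) v = net G A v + net G Bs v"
  unfolding net_def by (rule sum.union_disjoint)

lemma path_exists:
  assumes wf: "wf_digraph G" and fv: "finite (verts G)" and A: "A \<subseteq> arcs G" "finite A"
    and s: "s \<in> verts G" and st: "s \<noteq> t"
    and n: "\<And>v. net G A v = int (Suc m) * ind s t v"
  shows "\<exists>p. pre_digraph.awalk G s p t \<and> set p \<subseteq> A"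
proof (rule ccontr)
  assume nt: "\<not> ?thesis"
  interpret wf_digraph G by (rule wf)
  define W where "W = {v. \<exists>p. awalk s p v \<and> set p \<subseteq> A}"
  have tW: "t \<notin> W" using nt unfolding W_def by blast
  have sW: "s \<in> W" unfolding W_def using s by (auto simp: awalk_Nil_iff intro!: exI[of _ "[]"])
  have WV: "W \<subseteq> verts G" unfolding W_def by (auto simp: awalk_last_in_verts)
  then have fW: "finite W" using fv finite_subset by blast
  have cl: "head G a \<in> W" if aa: "a \<in> A" "tail G a \<in> W" for a
  proof -
    obtain p where p: "awalk s p (tail G a)" "set p \<subseteq> A" using aa(2) unfolding W_def by blast
    have "awalk s (p @ [a]) (head G a)"
      using awalk_appendI[OF p(1) arc_implies_awalk] aa A by auto
    then show ?thesis unfolding W_def using p aa by (auto intro!: exI[of _ "p @ [a]"])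
  qed
  have "(\<Sum>v\<in>W. net G A v) = (\<Sum>v\<in>W. int (Suc m) * ind s t v)" using n by simp
  also have "\<dots> = int (Suc m) * (\<Sum>v\<in>W. ind s t v)" by (simp add: sum_distrib_left)
  also have "(\<Sum>v\<in>W. ind s t v) = 1"
    using sW tW fW by (simp add: ind_def sum_subtractf sum.delta)
  finally have e1: "(\<Sum>v\<in>W. net G A v) = int (Suc m)" by simp
  have "(\<Sum>v\<in>W. net G A v) = (\<Sum>a\<in>A. \<Sum>v\<in>W. (if tail G a = v then 1 else 0) - (if head G a = v then 1 else 0))"
    unfolding net_def by (rule sum.swap)
  also have "\<dots> = (\<Sum>a\<in>A. (if tail G a \<in> W then 1 else 0) - (if head G a \<in> W then 1 else 0))"
    using fW by (simp add: sum_subtractf sum.delta)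
  also have "\<dots> \<le> (\<Sum>a\<in>A. 0)"
    by (rule sum_mono) (use cl in auto)
  finally show False using e1 by simp
qed

definition dpaths :: "('a,'b) pre_digraph \<Rightarrow> 'a \<Rightarrow> 'a \<Rightarrow> 'b list set \<Rightarrow> bool" where
  "dpaths G s t Q \<longleftrightarrow> finite Q \<and> (\<forall>p\<in>Q. pre_digraph.apath G s p t) \<and>
                    (\<forall>p\<in>Q. \<forall>q\<in>Q. p \<noteq> q \<longrightarrow> set p \<inter> set q = {})"

lemma max_dp: "max_disjoint_paths G s t P \<longleftrightarrow> dpaths G s t P \<and> (\<forall>Q. dpaths G s t Q \<longrightarrow> card Q \<le> card P)"
  unfolding max_disjoint_paths_def dpaths_def Let_def by simp

lemma decomp:
  assumes wf: "wf_digraph G" and fv: "finite (verts G)" and A: "A \<subseteq> arcs G" "finite A"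
    and s: "s \<in> verts G" and st: "s \<noteq> t"
    and n: "\<And>v. net G A v = int m * ind s t v"
  shows "\<exists>Q. dpaths G s t Q \<and> card Q = m \<and> (\<forall>p\<in>Q. set p \<subseteq> A)"
  using A n
proof (induction m arbitrary: A)
  case 0
  then show ?case by (auto simp: dpaths_def intro!: exI[of _ "{}"])
next
  case (Suc m)
  interpret wf_digraph G by (rule wf)
  obtain p where p: "awalk s p t" "set p \<subseteq> A"
    using path_exists[OF wf fv Suc.prems(1,2) s st Suc.prems(3)] by blast
  define q where "q = awalk_to_apath p"
  have q: "apath s q t" "set q \<subseteq> A"
    using apath_awalk_to_apath[OF p(1)] awalk_to_apath_subset[OF p(1)] p(2) unfolding q_def by auto
  have dq: "distinct q" using q(1) distinct_verts_imp_distinct by (auto simp: apath_def)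
  have nq: "net G (set q) v = ind s t v" for v using trail_net[OF wf, of s q t] q(1) dq by (auto simp: apath_def)
  define A' where "A' = A - set q"
  have A': "A' \<subseteq> arcs G" "finite A'" using Suc.prems unfolding A'_def by auto
  have nA': "net G A' v = int m * ind s t v" for v
  proof -
    have "net G A' v = net G A v - net G (set q) v" unfolding A'_def by (rule net_diff[OF Suc.prems(2) q(2)])
    also have "\<dots> = int (Suc m) * ind s t v - ind s t v" using Suc.prems(3)[of v] nq[of v] by simp
    finally show ?thesis by (simp add: algebra_simps)
  qed
  obtain Q where Q: "dpaths G s t Q" "card Q = m" "\<forall>p\<in>Q. set p \<subseteq> A'"
    using Suc.IH[OF A' nA'] by blast
  have qne: "q \<noteq> []" using q(1) st by (auto simp: apath_Nil_iff)
  have qQ: "q \<notin> Q"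
  proof
    assume "q \<in> Q"
    then have "set q \<subseteq> A'" using Q(3) by blast
    then show False using qne unfolding A'_def by (cases q) auto
  qed
  have "dpaths G s t (insert q Q)"
    using Q(1) Q(3) q(1) unfolding dpaths_def A'_def by blast
  moreover have "card (insert q Q) = Suc m" using Q(1,2) qQ by (simp add: dpaths_def)
  moreover have "\<forall>p\<in>insert q Q. set p \<subseteq> A" using Q(3) q(2) unfolding A'_def by blast
  ultimately show ?case by blast
qed



definition res :: "('a,'b) pre_digraph \<Rightarrow> 'b set \<Rightarrow> ('a, 'b \<times> bool) pre_digraph" where
  "res G F = \<lparr> verts = verts G,
     arcs = (\<lambda>a. (a, True)) ` (arcs G - F) \<union> (\<lambda>a. (a, False)) ` F,
     tail = (\<lambda>x. if snd x then tail G (fst x) else head G (fst x)),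
     head = (\<lambda>x. if snd x then head G (fst x) else tail G (fst x)) \<rparr>"

lemma res_wf: "wf_digraph G \<Longrightarrow> F \<subseteq> arcs G \<Longrightarrow> wf_digraph (res G F)"
  unfolding wf_digraph_def res_def by auto

lemma walk_exits:
  assumes wf: "wf_digraph G" and "pre_digraph.awalk G u p w" "u \<in> R" "w \<notin> R"
  shows "\<exists>a\<in>set p. a \<in> arcs G \<and> tail G a \<in> R \<and> head G a \<notin> R"
  using assms(2-4)
proof (induction p arbitrary: u)
  case Nil then show ?case by (auto simp: wf_digraph.awalk_Nil_iff[OF wf])
next
  case (Cons a p)
  then have h: "a \<in> arcs G" "u = tail G a" "pre_digraph.awalk G (head G a) p w"
    by (auto simp: wf_digraph.awalk_Cons_iff[OF wf])
  show ?case
  proof (cases "head G a \<in> R")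
    case True then show ?thesis using Cons.IH[OF h(3) True Cons.prems(3)] by auto
  next
    case False then show ?thesis using h Cons.prems by auto
  qed
qed

lemma walk_out_stays:
  assumes wf: "wf_digraph G" and "pre_digraph.awalk G u p w" "u \<notin> R" "set p \<subseteq> F"
    and bkw: "\<And>a. a \<in> F \<Longrightarrow> head G a \<in> R \<Longrightarrow> tail G a \<in> R"
  shows "\<forall>a\<in>set p. tail G a \<notin> R"
  using assms(2-4)
proof (induction p arbitrary: u)
  case Nil then show ?case by simp
next
  case (Cons a p)
  then have h: "a \<in> arcs G" "u = tail G a" "pre_digraph.awalk G (head G a) p w" "a \<in> F" "set p \<subseteq> F"
    by (auto simp: wf_digraph.awalk_Cons_iff[OF wf])
  have "head G a \<notin> R" using bkw[OF h(4)] h(2) Cons.prems(2) by blast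
  then show ?case using Cons.IH[OF h(3) _ h(5)] h(2) Cons.prems(2) by auto
qed

lemma walk_one_exit:
  assumes wf: "wf_digraph G" and "pre_digraph.awalk G u p w" "set p \<subseteq> F"
    and bkw: "\<And>a. a \<in> F \<Longrightarrow> head G a \<in> R \<Longrightarrow> tail G a \<in> R"
  shows "card (set p \<inter> {a. tail G a \<in> R \<and> head G a \<notin> R}) \<le> 1"
  using assms(2-3)
proof (induction p arbitrary: u)
  case Nil then show ?case by simp
next
  case (Cons a p)
  then have h: "a \<in> arcs G" "u = tail G a" "pre_digraph.awalk G (head G a) p w" "a \<in> F" "set p \<subseteq> F"
    by (auto simp: wf_digraph.awalk_Cons_iff[OF wf])
  show ?case
  proof (cases "head G a \<in> R")
    case True
    then have "set (a # p) \<inter> {a. tail G a \<in> R \<and> head G a \<notin> R} = set p \<inter> {a. tail G a \<in> R \<and> head G a \<notin> R}"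
      by auto
    then show ?thesis using Cons.IH[OF h(3) h(5)] by simp
  next
    case False
    have "\<forall>b\<in>set p. tail G b \<notin> R" using walk_out_stays[OF wf h(3) False h(5) bkw] by blast
    then have "set (a # p) \<inter> {a. tail G a \<in> R \<and> head G a \<notin> R} \<subseteq> {a}" by auto
    then have "card (set (a # p) \<inter> {a. tail G a \<in> R \<and> head G a \<notin> R}) \<le> card {a}"
      by (intro card_mono) auto
    then show ?thesis by simp
  qed
qed

lemma cut_small:
  assumes fin: "fin_digraph G" and s: "s \<in> verts G" and st: "s \<noteq> t"
    and mx: "max_disjoint_paths G s t P"
  shows "\<exists>D. st_cut G s t D \<and> card D \<le> card P"
proof -
  interpret fin_digraph G by (rule fin)
  have wf: "wf_digraph G" by (rule wf_digraph)
  from mx have dP: "dpaths G s t P" and mxP: "\<And>Q. dpaths G s t Q \<Longrightarrow> card Q \<le> card P"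
    by (auto simp: max_dp)
  have finP: "finite P" and apP: "\<And>p. p \<in> P \<Longrightarrow> apath s p t"
    and disj: "\<And>p q. p \<in> P \<Longrightarrow> q \<in> P \<Longrightarrow> p \<noteq> q \<Longrightarrow> set p \<inter> set q = {}"
    using dP by (auto simp: dpaths_def)
  define F where "F = \<Union>(set ` P)"
  have FA: "F \<subseteq> arcs G" using apP by (force simp: F_def apath_def awalk_def)
  have finF: "finite F" using FA finite_subset finite_arcs by blast
  define H where "H = res G F"
  interpret H: wf_digraph H using res_wf[OF wf FA] H_def by simp
  define R where "R = {v. \<exists>q. H.awalk s q v}"
  have clH: "head H x \<in> R" if th: "v \<in> R" "x \<in> arcs H" "tail H x = v" for x v
  proof -
    obtain q where q: "H.awalk s q v" using th(1) R_def by blast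
    have "H.awalk s (q @ [x]) (head H x)"
      using H.awalk_appendI[OF q, of "[x]"] H.arc_implies_awalk[OF th(2)] th(3) by simp
    then show ?thesis unfolding R_def by blast
  qed
  have fwd: "head G a \<in> R" if "a \<in> arcs G" "a \<notin> F" "tail G a \<in> R" for a
    using clH[of "tail G a" "(a, True)"] that by (auto simp: H_def res_def)
  have bkw: "tail G a \<in> R" if "a \<in> F" "head G a \<in> R" for a
    using clH[of "head G a" "(a, False)"] that by (auto simp: H_def res_def)
  have "s \<in> verts H" using s by (simp add: H_def res_def)
  then have sR: "s \<in> R" unfolding R_def
    by (auto simp: H.awalk_Nil_iff intro!: exI[of _ "[]"])
  have nP: "net G (set p) v = ind s t v" if "p \<in> P" for p v
    using trail_net[OF wf, of s p t v] apP[OF that] distinct_verts_imp_distinct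
    by (auto simp: apath_def)
  show ?thesis
  proof (cases "t \<in> R")
    case True
    then obtain q0 where q0: "H.awalk s q0 t" unfolding R_def by blast
    define q where "q = H.awalk_to_apath q0"
    have q: "H.apath s q t" unfolding q_def by (rule H.apath_awalk_to_apath[OF q0])
    have dq: "distinct q" using q H.distinct_verts_imp_distinct by (auto simp: H.apath_def)
    have qH: "set q \<subseteq> arcs H" using q by (auto simp: H.apath_def H.awalk_def)
    define Fw where "Fw = {a. (a, True) \<in> set q}"
    define Bk where "Bk = {a. (a, False) \<in> set q}"
    have Fw: "Fw \<subseteq> arcs G - F" using qH by (auto simp: Fw_def H_def res_def)
    have Bk: "Bk \<subseteq> F" using qH by (auto simp: Bk_def H_def res_def)
    have finFw: "finite Fw" using Fw finite_arcs finite_subset by blast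
    have finBk: "finite Bk" using Bk finF finite_subset by blast
    have setq: "set q = (\<lambda>a. (a, True)) ` Fw \<union> (\<lambda>a. (a, False)) ` Bk"
    proof
      show "set q \<subseteq> (\<lambda>a. (a, True)) ` Fw \<union> (\<lambda>a. (a, False)) ` Bk"
      proof
        fix x assume xq: "x \<in> set q"
        obtain a b where x: "x = (a, b)" by (cases x)
        show "x \<in> (\<lambda>a. (a, True)) ` Fw \<union> (\<lambda>a. (a, False)) ` Bk"
          using xq unfolding x by (cases b) (auto simp: Fw_def Bk_def)
      qed
    qed (auto simp: Fw_def Bk_def)
    have nq: "net H (set q) v = ind s t v" for v
      using trail_net[OF H.wf_digraph, of s q t v] q dq by (auto simp: H.apath_def)
    have n1: "net H ((\<lambda>a. (a, True)) ` Fw) v = net G Fw v" for v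
      by (simp add: net_def sum.reindex inj_on_def H_def res_def)
    have n2: "net H ((\<lambda>a. (a, False)) ` Bk) v = - net G Bk v" for v
    proof -
      have "net H ((\<lambda>a. (a, False)) ` Bk) v =
         (\<Sum>a\<in>Bk. (if head G a = v then 1 else 0) - (if tail G a = v then 1 else 0))"
        by (simp add: net_def sum.reindex inj_on_def H_def res_def)
      then show ?thesis by (simp add: net_def sum_subtractf)
    qed
    have nq2: "net H (set q) v = net G Fw v - net G Bk v" for v
      unfolding setq using net_union[of "(\<lambda>a. (a, True)) ` Fw" "(\<lambda>a. (a, False)) ` Bk" H v] finFw finBk n1 n2
      by auto
    have nF: "net G F v = int (card P) * ind s t v" for v
    proof -
      have "net G F v = (\<Sum>p\<in>P. net G (set p) v)"
        unfolding F_def net_def by (rule sum.UNION_disjoint) (use finP disj in auto)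
      also have "\<dots> = (\<Sum>p\<in>P. ind s t v)" using nP by simp
      finally show ?thesis by simp
    qed
    define A where "A = (F - Bk) \<union> Fw"
    have A: "A \<subseteq> arcs G" "finite A" using FA Fw finF finFw unfolding A_def by auto
    have nA: "net G A v = int (Suc (card P)) * ind s t v" for v
    proof -
      have "net G A v = net G (F - Bk) v + net G Fw v"
        unfolding A_def by (rule net_union) (use finF finFw Fw in auto)
      also have "\<dots> = net G F v - net G Bk v + net G Fw v" using net_diff[OF finF Bk] by simp
      also have "\<dots> = int (card P) * ind s t v + ind s t v" using nF nq nq2 by simp
      finally show ?thesis by (simp add: algebra_simps)
    qed
    obtain Q where "dpaths G s t Q" "card Q = Suc (card P)"
      using decomp[OF wf finite_verts A s st nA] by blast
    then show ?thesis using mxP by fastforce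
  next
    case False
    define D where "D = {a \<in> arcs G. tail G a \<in> R \<and> head G a \<notin> R}"
    have cut: "st_cut G s t D"
      unfolding st_cut_def
    proof (intro conjI allI impI)
      show "D \<subseteq> arcs G" unfolding D_def by auto
      fix p assume "pre_digraph.apath G s p t"
      then have "awalk s p t" by (simp add: apath_def)
      from walk_exits[OF wf this sR False] show "set p \<inter> D \<noteq> {}" unfolding D_def by blast
    qed
    have DF: "D \<subseteq> F" using fwd unfolding D_def by blast
    have DU: "D = (\<Union>p\<in>P. set p \<inter> D)" using DF unfolding F_def by auto
    have "card D = (\<Sum>p\<in>P. card (set p \<inter> D))"
      by (subst DU, rule card_UN_disjoint) (use finP disj in auto)
    also have "\<dots> \<le> (\<Sum>p\<in>P. 1)"
    proof (rule sum_mono)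
      fix p assume pP: "p \<in> P"
      have w: "awalk s p t" using apP[OF pP] by (simp add: apath_def)
      have sp: "set p \<subseteq> F" using pP unfolding F_def by auto
      have "card (set p \<inter> D) \<le> card (set p \<inter> {a. tail G a \<in> R \<and> head G a \<notin> R})"
        by (rule card_mono) (auto simp: D_def)
      also have "\<dots> \<le> 1" by (rule walk_one_exit[OF wf w sp bkw])
      finally show "card (set p \<inter> D) \<le> 1" .
    qed
    finally show ?thesis using cut by auto
  qed
qed



lemma last_filter_split:
  assumes d: "distinct (u @ e # w)" and ne: "filter Q (u @ e # w) \<noteq> []"
  shows "last (filter Q (u @ e # w)) = e \<longleftrightarrow> Q e \<and> (\<forall>a\<in>set w. \<not> Q a)"
proof (cases "filter Q w = []")
  case False
  then have "last (filter Q (u @ e # w)) = last (filter Q w)" by simp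
  moreover have "last (filter Q w) \<in> set w" using False last_in_set by fastforce
  moreover have "e \<notin> set w" using d by simp
  moreover have "\<exists>a\<in>set w. Q a" using False by (simp add: filter_empty_conv)
  ultimately show ?thesis by auto
next
  case True
  show ?thesis
  proof (cases "Q e")
    case True
    then show ?thesis using \<open>filter Q w = []\<close> by (simp add: filter_empty_conv)
  next
    case False
    then have f: "filter Q (u @ e # w) = filter Q u" using True by simp
    then have "last (filter Q u) \<in> set u" using ne last_in_set by fastforce
    moreover have "e \<notin> set u" using d by simp
    ultimately show ?thesis using f False by auto
  qed
qed

lemma hd_filter_split:
  assumes d: "distinct (u @ e # w)" and ne: "filter Q (u @ e # w) \<noteq> []"
  shows "hd (filter Q (u @ e # w)) = e \<longleftrightarrow> Q e \<and> (\<forall>a\<in>set u. \<not> Q a)"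
proof (cases "filter Q u = []")
  case False
  then have "hd (filter Q (u @ e # w)) = hd (filter Q u)" by simp
  moreover have "hd (filter Q u) \<in> set u" using False hd_in_set by fastforce
  moreover have "e \<notin> set u" using d by simp
  moreover have "\<exists>a\<in>set u. Q a" using False by (simp add: filter_empty_conv)
  ultimately show ?thesis by auto
next
  case True
  show ?thesis
  proof (cases "Q e")
    case True
    then show ?thesis using \<open>filter Q u = []\<close> by (simp add: filter_empty_conv)
  next
    case False
    then have f: "filter Q (u @ e # w) = filter Q w" using True by simp
    then have "hd (filter Q w) \<in> set w" using ne hd_in_set by fastforce
    moreover have "e \<notin> set w" using d by simp
    ultimately show ?thesis using f False True by (auto simp: filter_empty_conv)
  qed
qed

lemma one_per_path:
  assumes fin: "fin_digraph G" and s: "s \<in> verts G" and st: "s \<noteq> t"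
    and mx: "max_disjoint_paths G s t P" and X: "X \<in> min_cuts G s t" and p: "p \<in> P"
  shows "card (set p \<inter> X) = 1"
proof -
  interpret fin_digraph G by (rule fin)
  obtain D where D: "st_cut G s t D" "card D \<le> card P" using cut_small[OF fin s st mx] by blast
  from X have cX: "st_cut G s t X" and cXD: "card X \<le> card D" using D unfolding min_cuts_def by auto
  have finX: "finite X" using cX finite_arcs finite_subset unfolding st_cut_def by blast
  from mx have dP: "dpaths G s t P" by (auto simp: max_dp)
  have finP: "finite P" and apP: "\<And>p. p \<in> P \<Longrightarrow> apath s p t"
    and disj: "\<And>p q. p \<in> P \<Longrightarrow> q \<in> P \<Longrightarrow> p \<noteq> q \<Longrightarrow> set p \<inter> set q = {}"
    using dP by (auto simp: dpaths_def)
  have ge: "card (set q \<inter> X) \<ge> 1" if "q \<in> P" for q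
  proof -
    have "set q \<inter> X \<noteq> {}" using cX apP[OF that] unfolding st_cut_def by blast
    then show ?thesis by (simp add: Suc_le_eq card_gt_0_iff)
  qed
  have "(\<Sum>q\<in>P. card (set q \<inter> X)) = card (\<Union>q\<in>P. set q \<inter> X)"
    by (rule card_UN_disjoint[symmetric]) (use finP disj in auto)
  also have "\<dots> \<le> card X" by (rule card_mono[OF finX]) auto
  finally have sm: "(\<Sum>q\<in>P. card (set q \<inter> X)) \<le> card P" using cXD D(2) by linarith
  show ?thesis
  proof (rule ccontr)
    assume "card (set p \<inter> X) \<noteq> 1"
    then have two: "card (set p \<inter> X) \<ge> 2" using ge[OF p] by linarith
    have "(\<Sum>q\<in>P. card (set q \<inter> X)) = card (set p \<inter> X) + (\<Sum>q\<in>P - {p}. card (set q \<inter> X))"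
      using finP p by (simp add: sum.remove)
    also have "(\<Sum>q\<in>P - {p}. card (set q \<inter> X)) \<ge> (\<Sum>q\<in>P - {p}. 1)"
      by (rule sum_mono) (use ge in auto)
    then have "(\<Sum>q\<in>P - {p}. card (set q \<inter> X)) \<ge> card P - 1" using finP p by simp
    ultimately have "(\<Sum>q\<in>P. card (set q \<inter> X)) \<ge> card P + 1"
      using two p finP card_gt_0_iff by fastforce
    then show False using sm by linarith
  qed
qed

lemma uniq_idx:
  assumes "distinct p" "card (set p \<inter> X) = 1"
  shows "\<exists>!j. j < length p \<and> p ! j \<in> X"
proof -
  obtain x where x: "set p \<inter> X = {x}" using assms(2) card_1_singletonE by blast
  then obtain j where j: "j < length p" "p ! j = x" by (metis Int_iff in_set_conv_nth singletonI)
  show ?thesis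
  proof (rule ex1I[of _ j])
    show "j < length p \<and> p ! j \<in> X" using j x by auto
    fix j' assume "j' < length p \<and> p ! j' \<in> X"
    then have "p ! j' = x" using x nth_mem by blast
    then show "j' = j" using j assms(1) nth_eq_iff_index_eq \<open>j' < length p \<and> p ! j' \<in> X\<close> by metis
  qed
qed



lemma all_set_drop: "(\<forall>a\<in>set (drop m xs). R a) \<longleftrightarrow> (\<forall>j. m \<le> j \<and> j < length xs \<longrightarrow> R (xs ! j))"
proof -
  have "(\<forall>a\<in>set (drop m xs). R a) \<longleftrightarrow> (\<forall>i<length xs - m. R (xs ! (m + i)))"
    by (simp add: all_set_conv_all_nth)
  also have "\<dots> \<longleftrightarrow> (\<forall>j. m \<le> j \<and> j < length xs \<longrightarrow> R (xs ! j))"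
  proof safe
    fix j assume a: "\<forall>i<length xs - m. R (xs ! (m + i))" "m \<le> j" "j < length xs"
    have "j - m < length xs - m" using a(2,3) by simp
    then have "R (xs ! (m + (j - m)))" using a(1) by blast
    then show "R (xs ! j)" using a(2) by simp
  qed simp
  finally show ?thesis .
qed

lemma all_set_take: "(\<forall>a\<in>set (take m xs). R a) \<longleftrightarrow> (\<forall>j. j < m \<and> j < length xs \<longrightarrow> R (xs ! j))"
  by (auto simp: all_set_conv_all_nth)

lemma lhf_in: "filter Q p \<noteq> [] \<Longrightarrow> last (filter Q p) \<in> set p"
  "filter Q p \<noteq> [] \<Longrightarrow> hd (filter Q p) \<in> set p"
  by (metis last_in_set filter_is_subset subsetD, metis hd_in_set filter_is_subset subsetD)

theorem claim1:
  fixes G :: "('a,'b) pre_digraph" and s t :: 'a and k :: nat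
    and P :: "'b list set" and C1 C2 :: "'b set list" and e :: 'b
  assumes "fin_digraph G"
    and "s \<in> verts G" and "t \<in> verts G"
    and "k \<ge> 1"
    and "max_disjoint_paths G s t P"
    and "C1 \<in> U_lr G s t k" and "C2 \<in> U_lr G s t k"
    and "e \<in> arcs G"
  shows "B e (L_join P C1 C2) + B e (L_meet P C1 C2) \<le> B e C1 + B e C2"
proof -
  note fin = assms(1) and s = assms(2) and mx = assms(5)
  interpret fin_digraph G by (rule fin)
  have l1: "length C1 = k" and l2: "length C2 = k"
    and c1: "set C1 \<subseteq> min_cuts G s t" and c2: "set C2 \<subseteq> min_cuts G s t"
    and o1: "\<And>i j. i < j \<Longrightarrow> j < k \<Longrightarrow> cut_le G s t (C1 ! i) (C1 ! j)"
    and o2: "\<And>i j. i < j \<Longrightarrow> j < k \<Longrightarrow> cut_le G s t (C2 ! i) (C2 ! j)"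
    using assms(6,7) unfolding U_lr_def by auto
  define X where "X i = C1 ! i" for i
  define Y where "Y i = C2 ! i" for i
  have Xm: "X i \<in> min_cuts G s t" if "i < k" for i using c1 l1 that nth_mem unfolding X_def by blast
  have Ym: "Y i \<in> min_cuts G s t" if "i < k" for i using c2 l2 that nth_mem unfolding Y_def by blast
  have st: "s \<noteq> t"
  proof
    assume "s = t"
    then have "apath s [] t" using s by (simp add: apath_Nil_iff)
    then show False using Xm[of 0] assms(4) unfolding min_cuts_def st_cut_def by fastforce
  qed
  from mx have dP: "dpaths G s t P" by (auto simp: max_dp)
  have finP: "finite P" and apP: "\<And>p. p \<in> P \<Longrightarrow> apath s p t"
    and disj: "\<And>p q. p \<in> P \<Longrightarrow> q \<in> P \<Longrightarrow> p \<noteq> q \<Longrightarrow> set p \<inter> set q = {}"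
    using dP by (auto simp: dpaths_def)
  have hits: "filter (\<lambda>a. a \<in> X i \<union> Y i) p \<noteq> []" if "i < k" "p \<in> P" for i p
  proof -
    have "set p \<inter> X i \<noteq> {}" using Xm[OF that(1)] apP[OF that(2)] unfolding min_cuts_def st_cut_def by blast
    then show ?thesis by (auto simp: filter_empty_conv)
  qed
  have lJ: "length (L_join P C1 C2) = k" and lM: "length (L_meet P C1 C2) = k"
    using l1 l2 by (auto simp: L_join_def L_meet_def)
  have nJ: "L_join P C1 C2 ! i = S_max P (X i \<union> Y i)" if "i < k" for i
    using that l1 l2 by (simp add: L_join_def X_def Y_def)
  have nM: "L_meet P C1 C2 ! i = S_min P (X i \<union> Y i)" if "i < k" for i
    using that l1 l2 by (simp add: L_meet_def X_def Y_def)
  have muJ: "mu e (L_join P C1 C2) = card {i. i < k \<and> e \<in> S_max P (X i \<union> Y i)}"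
    unfolding mu_def lJ by (rule arg_cong[where f=card]) (use nJ in auto)
  have muM: "mu e (L_meet P C1 C2) = card {i. i < k \<and> e \<in> S_min P (X i \<union> Y i)}"
    unfolding mu_def lM by (rule arg_cong[where f=card]) (use nM in auto)
  have mu1: "mu e C1 = card {i. i < k \<and> e \<in> X i}" unfolding mu_def l1 X_def ..
  have mu2: "mu e C2 = card {i. i < k \<and> e \<in> Y i}" unfolding mu_def l2 Y_def ..
  show ?thesis
  proof (cases "\<exists>p\<in>P. e \<in> set p")
    case False
    have "e \<notin> S_max P (X i \<union> Y i)" "e \<notin> S_min P (X i \<union> Y i)" if "i < k" for i
    proof -
      have "last (filter (\<lambda>a. a \<in> X i \<union> Y i) p) \<in> set p" "hd (filter (\<lambda>a. a \<in> X i \<union> Y i) p) \<in> set p"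
        if "p \<in> P" for p
        using hits[OF \<open>i < k\<close> that] by (simp_all add: lhf_in)
      then show "e \<notin> S_max P (X i \<union> Y i)" "e \<notin> S_min P (X i \<union> Y i)"
        using False unfolding S_max_def S_min_def by auto
    qed
    then have "mu e (L_join P C1 C2) = 0" "mu e (L_meet P C1 C2) = 0" unfolding muJ muM by auto
    then show ?thesis by (simp add: B_def binomial_eq_0)
  next
    case True
    then obtain p0 where p0: "p0 \<in> P" "e \<in> set p0" by blast
    define L where "L = length p0"
    have dp0: "distinct p0" using apP[OF p0(1)] distinct_verts_imp_distinct by (auto simp: apath_def)
    obtain n where n: "n < L" "p0 ! n = e" using p0(2) unfolding L_def by (metis in_set_conv_nth)
    have split: "p0 = take n p0 @ e # drop (Suc n) p0" using n unfolding L_def by (metis id_take_nth_drop)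
    have uX: "\<exists>!j. j < L \<and> p0 ! j \<in> X i" if "i < k" for i
      unfolding L_def by (rule uniq_idx[OF dp0 one_per_path[OF fin s st mx Xm[OF that] p0(1)]])
    have uY: "\<exists>!j. j < L \<and> p0 ! j \<in> Y i" if "i < k" for i
      unfolding L_def by (rule uniq_idx[OF dp0 one_per_path[OF fin s st mx Ym[OF that] p0(1)]])
    define x where "x i = (THE j. j < L \<and> p0 ! j \<in> X i)" for i
    define y where "y i = (THE j. j < L \<and> p0 ! j \<in> Y i)" for i
    have x1: "x i < L \<and> p0 ! x i \<in> X i" if "i < k" for i
      unfolding x_def by (rule theI'[OF uX[OF that]])
    have x2: "j = x i" if "i < k" "j < L" "p0 ! j \<in> X i" for i j
      using uX[OF that(1)] x1[OF that(1)] that(2,3) by blast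
    have y1: "y i < L \<and> p0 ! y i \<in> Y i" if "i < k" for i
      unfolding y_def by (rule theI'[OF uY[OF that]])
    have y2: "j = y i" if "i < k" "j < L" "p0 ! j \<in> Y i" for i j
      using uY[OF that(1)] y1[OF that(1)] that(2,3) by blast
    have mx_: "x i \<le> x i'" if "i \<le> i'" "i' < k" for i i'
    proof (cases "i = i'")
      case False
      then have "i < i'" using that by simp
      then have "cut_le G s t (X i) (X i')" using o1 that unfolding X_def by blast
      then obtain idx where idx: "idx < L" "p0 ! idx \<in> X i" "\<forall>j<idx. p0 ! j \<notin> X i'"
        using apP[OF p0(1)] unfolding cut_le_def L_def by blast
      have "idx = x i" using x2[OF _ idx(1,2)] that by simp
      then show ?thesis using idx(3) x1[OF that(2)] by (meson not_le)
    qed simp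
    have my_: "y i \<le> y i'" if "i \<le> i'" "i' < k" for i i'
    proof (cases "i = i'")
      case False
      then have "i < i'" using that by simp
      then have "cut_le G s t (Y i) (Y i')" using o2 that unfolding Y_def by blast
      then obtain idx where idx: "idx < L" "p0 ! idx \<in> Y i" "\<forall>j<idx. p0 ! j \<notin> Y i'"
        using apP[OF p0(1)] unfolding cut_le_def L_def by blast
      have "idx = y i" using y2[OF _ idx(1,2)] that by simp
      then show ?thesis using idx(3) y1[OF that(2)] by (meson not_le)
    qed simp
    have inZ: "p0 ! j \<in> X i \<union> Y i \<longleftrightarrow> j = x i \<or> j = y i" if "i < k" "j < L" for i j
      using x1[OF that(1)] y1[OF that(1)] x2[OF that] y2[OF that] by auto
    have eX: "e \<in> X i \<longleftrightarrow> x i = n" if "i < k" for i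
      using x1[OF that] x2[OF that n(1)] n(2) by auto
    have eY: "e \<in> Y i \<longleftrightarrow> y i = n" if "i < k" for i
      using y1[OF that] y2[OF that n(1)] n(2) by auto
    have eS: "e \<in> S_max P Z \<longleftrightarrow> last (filter (\<lambda>a. a \<in> Z) p0) = e"
      "e \<in> S_min P Z \<longleftrightarrow> hd (filter (\<lambda>a. a \<in> Z) p0) = e"
      if "\<And>p. p \<in> P \<Longrightarrow> filter (\<lambda>a. a \<in> Z) p \<noteq> []" for Z
    proof -
      have "last (filter (\<lambda>a. a \<in> Z) p) \<noteq> e" "hd (filter (\<lambda>a. a \<in> Z) p) \<noteq> e" if "p \<in> P" "p \<noteq> p0" for p
      proof -
        have "last (filter (\<lambda>a. a \<in> Z) p) \<in> set p" "hd (filter (\<lambda>a. a \<in> Z) p) \<in> set p"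
          using \<open>\<And>p. p \<in> P \<Longrightarrow> filter (\<lambda>a. a \<in> Z) p \<noteq> []\<close>[OF that(1)]
          by (simp_all add: lhf_in)
        then show "last (filter (\<lambda>a. a \<in> Z) p) \<noteq> e" "hd (filter (\<lambda>a. a \<in> Z) p) \<noteq> e"
          using disj[OF that(1) p0(1) that(2)] p0(2) by auto
      qed
      then show "e \<in> S_max P Z \<longleftrightarrow> last (filter (\<lambda>a. a \<in> Z) p0) = e"
        "e \<in> S_min P Z \<longleftrightarrow> hd (filter (\<lambda>a. a \<in> Z) p0) = e"
        unfolding S_max_def S_min_def using p0(1) by auto
    qed
    have dsplit: "distinct (take n p0 @ e # drop (Suc n) p0)" using dp0 split by simp
    have eJ: "e \<in> S_max P (X i \<union> Y i) \<longleftrightarrow> max (x i) (y i) = n" if "i < k" for i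
    proof -
      have ne: "filter (\<lambda>a. a \<in> X i \<union> Y i) (take n p0 @ e # drop (Suc n) p0) \<noteq> []"
        using hits[OF that p0(1)] split by simp
      have "e \<in> S_max P (X i \<union> Y i) \<longleftrightarrow> last (filter (\<lambda>a. a \<in> X i \<union> Y i) p0) = e"
        using eS(1) hits[OF that] by blast
      also have "\<dots> \<longleftrightarrow> e \<in> X i \<union> Y i \<and> (\<forall>a\<in>set (drop (Suc n) p0). a \<notin> X i \<union> Y i)"
        using last_filter_split[OF dsplit ne] split by simp
      also have "\<dots> \<longleftrightarrow> (x i = n \<or> y i = n) \<and> (\<forall>j. Suc n \<le> j \<and> j < L \<longrightarrow> \<not> (j = x i \<or> j = y i))"
        unfolding all_set_drop L_def[symmetric] using eX[OF that] eY[OF that] inZ[OF that] by auto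
      also have "\<dots> \<longleftrightarrow> max (x i) (y i) = n"
        using x1[OF that] y1[OF that] by (auto simp: max_def not_le dest: spec[of _ "y i"] spec[of _ "x i"])
      finally show ?thesis .
    qed
    have eM: "e \<in> S_min P (X i \<union> Y i) \<longleftrightarrow> min (x i) (y i) = n" if "i < k" for i
    proof -
      have ne: "filter (\<lambda>a. a \<in> X i \<union> Y i) (take n p0 @ e # drop (Suc n) p0) \<noteq> []"
        using hits[OF that p0(1)] split by simp
      have "e \<in> S_min P (X i \<union> Y i) \<longleftrightarrow> hd (filter (\<lambda>a. a \<in> X i \<union> Y i) p0) = e"
        using eS(2) hits[OF that] by blast
      also have "\<dots> \<longleftrightarrow> e \<in> X i \<union> Y i \<and> (\<forall>a\<in>set (take n p0). a \<notin> X i \<union> Y i)"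
        using hd_filter_split[OF dsplit ne] split by simp
      also have "\<dots> \<longleftrightarrow> (x i = n \<or> y i = n) \<and> (\<forall>j. j < n \<and> j < L \<longrightarrow> \<not> (j = x i \<or> j = y i))"
        unfolding all_set_take L_def[symmetric] using eX[OF that] eY[OF that] inZ[OF that] by auto
      also have "\<dots> \<longleftrightarrow> min (x i) (y i) = n"
        using x1[OF that] y1[OF that] n(1) by (auto simp: min_def not_le dest: spec[of _ "y i"] spec[of _ "x i"])
      finally show ?thesis .
    qed
    have "mu e (L_join P C1 C2) = card {i. i < k \<and> max (x i) (y i) = n}"
      unfolding muJ by (rule arg_cong[where f=card]) (use eJ in auto)
    moreover have "mu e (L_meet P C1 C2) = card {i. i < k \<and> min (x i) (y i) = n}"
      unfolding muM by (rule arg_cong[where f=card]) (use eM in auto)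
    moreover have "mu e C1 = card {i. i < k \<and> x i = n}" unfolding mu1 by (rule arg_cong[where f=card]) (use eX in auto)
    moreover have "mu e C2 = card {i. i < k \<and> y i = n}" unfolding mu2 by (rule arg_cong[where f=card]) (use eY in auto)
    ultimately show ?thesis unfolding B_def using core[of k x y n, OF mx_ my_] by (simp only:)
  qed
qed


end
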